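(* Assume the linear model $X_a=X^a\theta^0_a+\epsilon_a$. On the event $\Lambda_a$, if $\lambda\ge2\lambda_0$ and $\mu\ge2\mu_0$, then $$\frac2n\|X^a(\hat\theta^{\lambda,\mu}_a-\theta^0_a)\|_2^2+(\lambda-3B\mu)\|\hat\theta^{\lambda,\mu}_{a,S_0^c}\|_1\le(3\lambda+5B\mu)\|\hat\theta^{\lambda,\mu}_{a,S_0}-\theta^0_{a,S_0}\|_1.$$
   Context: Fix a node $a$. $X_a\in\mathbb{R}^n$ is the observed $a$-th variable, $X^a$ the $n\times p$ observation matrix with $a$-th column set to zero, $X^a_j$ its $j$-th column, $\theta^0_a$ the true coefficient vector, $\epsilon_a$ the noise. $S_0=\{j:\theta^0_{a,j}\neq0\}$. For $S\subseteq\{1,\dots,p\}$ and $\theta\in\mathbb{R}^p$, $\theta_S$ is the vector with entries $\theta_j\mathbf{1}\{j\in S\}$, and $\theta_{S^c}$ has entries $\theta_j\mathbf{1}\{j\notin S\}$. The local difference matrix $D^a$: from a known local neighborhood graph with edge set $E_{\rm local}$, $D$ has a row $e_i-e_j$ per edge $\{i,j\}$, $i<j$, and $D^a$ keeps rows with $a$-th entry $0$. $B$ bounds the number of nonzero entries in any column of $D^a$. $\hat\theta^{\lambda,\mu}_a=\operatorname{argmin}_{\theta_a}\big[\frac1n\|X_a-X^a\theta_a\|_2^2+\lambda\|\theta_a\|_1+\mu\|D^a\theta_a\|_1\big]$. For $\lambda_0,\mu_0>0$, $\Lambda_a:=\{\max_{j\neq a}\frac2n|\epsilon_a'X^a_j|\le\lambda_0+B\mu_0\}$.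 *)

theory Defs
  imports Complex_Main
begin

text \<open>Conventions: variables are indexed by 1..p, observations by 1..n.
  Vectors in R^p are functions nat => real (only entries 1..p matter),
  vectors in R^n are functions nat => real (entries 1..n),
  the full n x p data matrix is X :: nat => nat => real, X i j = observation i of variable j.\<close>

definition l1norm :: "nat \<Rightarrow> (nat \<Rightarrow> real) \<Rightarrow> real" where
  "l1norm p v = (\<Sum>j=1..p. \<bar>v j\<bar>)"

definition sqnorm :: "nat \<Rightarrow> (nat \<Rightarrow> real) \<Rightarrow> real" where
  "sqnorm n v = (\<Sum>i=1..n. (v i)\<^sup>2)"

definition vrestr :: "nat set \<Rightarrow> (nat \<Rightarrow> real) \<Rightarrow> (nat \<Rightarrow> real)" where
  "vrestr S \<theta> = (\<lambda>j. if j \<in> S then \<theta> j else 0)"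

definition Xcol :: "(nat \<Rightarrow> nat \<Rightarrow> real) \<Rightarrow> nat \<Rightarrow> (nat \<Rightarrow> real)" where
  "Xcol X a = (\<lambda>i. X i a)"

definition Xminus :: "(nat \<Rightarrow> nat \<Rightarrow> real) \<Rightarrow> nat \<Rightarrow> (nat \<Rightarrow> nat \<Rightarrow> real)" where
  "Xminus X a = (\<lambda>i j. if j = a then 0 else X i j)"

definition mvmult :: "nat \<Rightarrow> (nat \<Rightarrow> nat \<Rightarrow> real) \<Rightarrow> (nat \<Rightarrow> real) \<Rightarrow> (nat \<Rightarrow> real)" where
  "mvmult p M \<theta> = (\<lambda>i. \<Sum>j=1..p. M i j * \<theta> j)"

text \<open>Edges of the local neighbourhood graph are stored as pairs (i,j) with i<j.
  Row set of D^a: edges whose row e_i - e_j has a-th entry 0, i.e. a not in {i,j}.\<close>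
definition Drows :: "(nat \<times> nat) set \<Rightarrow> nat \<Rightarrow> (nat \<times> nat) set" where
  "Drows E a = {(i,j) \<in> E. i \<noteq> a \<and> j \<noteq> a}"

definition Dentry :: "nat \<times> nat \<Rightarrow> nat \<Rightarrow> real" where
  "Dentry e k = (if k = fst e then 1 else if k = snd e then -1 else 0)"

definition Dl1 :: "nat \<Rightarrow> (nat \<times> nat) set \<Rightarrow> nat \<Rightarrow> (nat \<Rightarrow> real) \<Rightarrow> real" where
  "Dl1 p E a \<theta> = (\<Sum>e\<in>Drows E a. \<bar>\<Sum>k=1..p. Dentry e k * \<theta> k\<bar>)"

definition objective :: "nat \<Rightarrow> nat \<Rightarrow> (nat \<Rightarrow> nat \<Rightarrow> real) \<Rightarrow> nat \<Rightarrow> (nat \<times> nat) set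
    \<Rightarrow> real \<Rightarrow> real \<Rightarrow> (nat \<Rightarrow> real) \<Rightarrow> real" where
  "objective n p X a E lam mu \<theta> =
     (1 / real n) * sqnorm n (\<lambda>i. Xcol X a i - mvmult p (Xminus X a) \<theta> i)
     + lam * l1norm p \<theta> + mu * Dl1 p E a \<theta>"

end

theory Submission
  imports Defs
begin

lemma Dl1_diff_bound:
  fixes p a B :: nat and E :: "(nat \<times> nat) set" and u v :: "nat \<Rightarrow> real"
  assumes edges: "\<forall>(i,j)\<in>E. i < j \<and> i \<in> {1..p} \<and> j \<in> {1..p}"
    and B_bound: "\<forall>k\<in>{1..p}. card {e \<in> Drows E a. Dentry e k \<noteq> 0} \<le> B"
  shows "Dl1 p E a u - Dl1 p E a v \<le> real B * l1norm p (\<lambda>j. v j - u j)"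
proof -
  have finE: "finite E"
  proof (rule finite_subset)
    show "E \<subseteq> {1..p} \<times> {1..p}" using edges by auto
  qed auto
  have finD: "finite (Drows E a)" using finE unfolding Drows_def
    by (rule finite_subset[rotated]) auto
  have absD: "\<bar>Dentry e k\<bar> \<le> 1" for e k unfolding Dentry_def by auto
  have "Dl1 p E a u - Dl1 p E a v = (\<Sum>e\<in>Drows E a. \<bar>\<Sum>k=1..p. Dentry e k * u k\<bar> - \<bar>\<Sum>k=1..p. Dentry e k * v k\<bar>)"
    unfolding Dl1_def by (simp add: sum_subtractf)
  also have "\<dots> \<le> (\<Sum>e\<in>Drows E a. \<Sum>k=1..p. \<bar>Dentry e k\<bar> * \<bar>v k - u k\<bar>)"
  proof (rule sum_mono)
    fix e
    have "\<bar>\<Sum>k=1..p. Dentry e k * u k\<bar> - \<bar>\<Sum>k=1..p. Dentry e k * v k\<bar>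
        \<le> \<bar>(\<Sum>k=1..p. Dentry e k * v k) - (\<Sum>k=1..p. Dentry e k * u k)\<bar>" by linarith
    also have "\<dots> = \<bar>\<Sum>k=1..p. Dentry e k * (v k - u k)\<bar>"
      by (simp add: sum_subtractf right_diff_distrib)
    also have "\<dots> \<le> (\<Sum>k=1..p. \<bar>Dentry e k * (v k - u k)\<bar>)" by (rule sum_abs)
    also have "\<dots> = (\<Sum>k=1..p. \<bar>Dentry e k\<bar> * \<bar>v k - u k\<bar>)" by (simp add: abs_mult)
    finally show "\<bar>\<Sum>k=1..p. Dentry e k * u k\<bar> - \<bar>\<Sum>k=1..p. Dentry e k * v k\<bar>
        \<le> (\<Sum>k=1..p. \<bar>Dentry e k\<bar> * \<bar>v k - u k\<bar>)" .
  qed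
  also have "\<dots> = (\<Sum>k=1..p. (\<Sum>e\<in>Drows E a. \<bar>Dentry e k\<bar>) * \<bar>v k - u k\<bar>)"
    by (subst sum.swap) (simp add: sum_distrib_right)
  also have "\<dots> \<le> (\<Sum>k=1..p. real B * \<bar>v k - u k\<bar>)"
  proof (rule sum_mono)
    fix k assume k: "k \<in> {1..p}"
    have "(\<Sum>e\<in>Drows E a. \<bar>Dentry e k\<bar>) = (\<Sum>e\<in>{e \<in> Drows E a. Dentry e k \<noteq> 0}. \<bar>Dentry e k\<bar>)"
      using finD by (intro sum.mono_neutral_right) auto
    also have "\<dots> \<le> (\<Sum>e\<in>{e \<in> Drows E a. Dentry e k \<noteq> 0}. 1)"
      by (rule sum_mono) (rule absD)
    also have "\<dots> = real (card {e \<in> Drows E a. Dentry e k \<noteq> 0})" by simp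
    also have "\<dots> \<le> real B" using B_bound k by auto
    finally show "(\<Sum>e\<in>Drows E a. \<bar>Dentry e k\<bar>) * \<bar>v k - u k\<bar> \<le> real B * \<bar>v k - u k\<bar>"
      by (rule mult_right_mono) simp
  qed
  also have "\<dots> = real B * l1norm p (\<lambda>j. v j - u j)"
    unfolding l1norm_def by (simp add: sum_distrib_left)
  finally show ?thesis .
qed

theorem mainTheorem12:
  fixes n p a B :: nat
    and X :: "nat \<Rightarrow> nat \<Rightarrow> real"
    and \<theta>0 \<epsilon> \<theta>hat :: "nat \<Rightarrow> real"
    and E :: "(nat \<times> nat) set"
    and lam mu lam0 mu0 :: real
  assumes n_pos: "0 < n"
    and a_in: "a \<in> {1..p}"
    and edges: "\<forall>(i,j)\<in>E. i < j \<and> i \<in> {1..p} \<and> j \<in> {1..p}"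
    and B_bound: "\<forall>k\<in>{1..p}. card {e \<in> Drows E a. Dentry e k \<noteq> 0} \<le> B"
    and model: "\<forall>i\<in>{1..n}. Xcol X a i = mvmult p (Xminus X a) \<theta>0 i + \<epsilon> i"
    and minimizer: "\<forall>\<theta>. objective n p X a E lam mu \<theta>hat \<le> objective n p X a E lam mu \<theta>"
    and pos0: "0 < lam0" "0 < mu0"
    and Lambda_a: "\<forall>j\<in>{1..p} - {a}.
        2 / real n * \<bar>\<Sum>i=1..n. \<epsilon> i * Xminus X a i j\<bar> \<le> lam0 + real B * mu0"
    and lam: "lam \<ge> 2 * lam0"
    and mu: "mu \<ge> 2 * mu0"
  defines "S0 \<equiv> {j \<in> {1..p}. \<theta>0 j \<noteq> 0}"
  shows "2 / real n * sqnorm n (mvmult p (Xminus X a) (\<lambda>j. \<theta>hat j - \<theta>0 j))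
           + (lam - 3 * real B * mu) * l1norm p (vrestr ({1..p} - S0) \<theta>hat)
         \<le> (3 * lam + 5 * real B * mu) * l1norm p (\<lambda>j. vrestr S0 \<theta>hat j - vrestr S0 \<theta>0 j)"
proof -
  define M where "M = Xminus X a"
  define d where "d = (\<lambda>j. \<theta>hat j - \<theta>0 j)"
  define Md where "Md = mvmult p M d"
  define C where "C = (\<Sum>i=1..n. \<epsilon> i * Md i)"
  define dS where "dS = l1norm p (\<lambda>j. vrestr S0 \<theta>hat j - vrestr S0 \<theta>0 j)"
  define hS where "hS = l1norm p (vrestr ({1..p} - S0) \<theta>hat)"
  have nn: "real n > 0" using n_pos by simp
  have Mdiff: "mvmult p M \<theta>hat i - mvmult p M \<theta>0 i = Md i" for i
    unfolding Md_def mvmult_def d_def by (simp add: sum_subtractf right_diff_distrib)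
  have r0: "sqnorm n (\<lambda>i. Xcol X a i - mvmult p M \<theta>0 i) = sqnorm n \<epsilon>"
    unfolding sqnorm_def using model M_def by (intro sum.cong) auto
  have rh: "sqnorm n (\<lambda>i. Xcol X a i - mvmult p M \<theta>hat i) = sqnorm n \<epsilon> - 2 * C + sqnorm n Md"
  proof -
    have "sqnorm n (\<lambda>i. Xcol X a i - mvmult p M \<theta>hat i) = (\<Sum>i=1..n. (\<epsilon> i)\<^sup>2 - 2 * (\<epsilon> i * Md i) + (Md i)\<^sup>2)"
      unfolding sqnorm_def
    proof (intro sum.cong refl)
      fix i assume i: "i \<in> {1..n}"
      have "Xcol X a i - mvmult p M \<theta>hat i = \<epsilon> i - Md i"
        using model i Mdiff[of i] M_def by force
      then show "(Xcol X a i - mvmult p M \<theta>hat i)\<^sup>2 = (\<epsilon> i)\<^sup>2 - 2 * (\<epsilon> i * Md i) + (Md i)\<^sup>2"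
        by (simp only: power2_eq_square) (simp add: algebra_simps)
    qed
    also have "\<dots> = sqnorm n \<epsilon> - 2 * C + sqnorm n Md"
      unfolding sqnorm_def C_def by (simp add: sum.distrib sum_subtractf sum_distrib_left)
    finally show ?thesis .
  qed
  have basic: "objective n p X a E lam mu \<theta>hat \<le> objective n p X a E lam mu \<theta>0"
    using minimizer by blast
  hence basic2: "(1/real n) * (sqnorm n \<epsilon> - 2 * C + sqnorm n Md) + lam * l1norm p \<theta>hat + mu * Dl1 p E a \<theta>hat
      \<le> (1/real n) * sqnorm n \<epsilon> + lam * l1norm p \<theta>0 + mu * Dl1 p E a \<theta>0"
    unfolding objective_def using r0 rh M_def by simp
  have Csw: "C = (\<Sum>j=1..p. d j * (\<Sum>i=1..n. \<epsilon> i * M i j))"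
    unfolding C_def Md_def mvmult_def
    by (simp add: sum_distrib_left sum_distrib_right mult_ac) (rule sum.swap)
  have "2 / real n * \<bar>C\<bar> \<le> 2 / real n * (\<Sum>j=1..p. \<bar>d j\<bar> * \<bar>\<Sum>i=1..n. \<epsilon> i * M i j\<bar>)"
    unfolding Csw using nn by (intro mult_left_mono) (auto simp: abs_mult intro: order_trans[OF sum_abs])
  also have "\<dots> = (\<Sum>j=1..p. \<bar>d j\<bar> * (2 / real n * \<bar>\<Sum>i=1..n. \<epsilon> i * M i j\<bar>))"
    by (simp add: sum_distrib_left mult_ac)
  also have "\<dots> \<le> (\<Sum>j=1..p. \<bar>d j\<bar> * (lam0 + real B * mu0))"
  proof (rule sum_mono)
    fix j assume j: "j \<in> {1..p}"
    have "2 / real n * \<bar>\<Sum>i=1..n. \<epsilon> i * M i j\<bar> \<le> lam0 + real B * mu0"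
    proof (cases "j = a")
      case True thus ?thesis using pos0 by (simp add: M_def Xminus_def)
    next
      case False thus ?thesis using Lambda_a j M_def by auto
    qed
    thus "\<bar>d j\<bar> * (2 / real n * \<bar>\<Sum>i=1..n. \<epsilon> i * M i j\<bar>) \<le> \<bar>d j\<bar> * (lam0 + real B * mu0)"
      by (rule mult_left_mono) simp
  qed
  also have "\<dots> = (lam0 + real B * mu0) * l1norm p d"
    unfolding l1norm_def by (simp add: sum_distrib_left mult_ac)
  finally have cross: "2 / real n * \<bar>C\<bar> \<le> (lam0 + real B * mu0) * l1norm p d" .
  have dsplit: "l1norm p d = dS + hS"
    unfolding dS_def hS_def l1norm_def sum.distrib[symmetric]
    by (intro sum.cong refl) (auto simp: vrestr_def d_def S0_def)
  have l1diff: "l1norm p \<theta>0 - l1norm p \<theta>hat \<le> dS - hS"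
    unfolding dS_def hS_def l1norm_def sum_subtractf[symmetric]
    by (intro sum_mono) (auto simp: vrestr_def S0_def)
  have Dd: "Dl1 p E a \<theta>0 - Dl1 p E a \<theta>hat \<le> real B * l1norm p d"
    using Dl1_diff_bound[OF edges B_bound, of \<theta>0 \<theta>hat] unfolding d_def by simp
  have sqMd: "sqnorm n Md \<ge> 0" unfolding sqnorm_def by (simp add: sum_nonneg)
  have dS0: "dS \<ge> 0" unfolding dS_def l1norm_def by (simp add: sum_nonneg)
  have hS0: "hS \<ge> 0" unfolding hS_def l1norm_def by (simp add: sum_nonneg)
  have mu0': "mu \<ge> 0" using mu pos0 by simp
  have B0: "real B * mu \<ge> 0" using mu0' by simp
  have step: "2 / real n * sqnorm n Md \<le> 4 / real n * C + 2 * lam * (l1norm p \<theta>0 - l1norm p \<theta>hat)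
        + 2 * mu * (Dl1 p E a \<theta>0 - Dl1 p E a \<theta>hat)"
  proof -
    have "2 * ((1/real n) * (sqnorm n \<epsilon> - 2 * C + sqnorm n Md) + lam * l1norm p \<theta>hat + mu * Dl1 p E a \<theta>hat)
      \<le> 2 * ((1/real n) * sqnorm n \<epsilon> + lam * l1norm p \<theta>0 + mu * Dl1 p E a \<theta>0)"
      using basic2 by (intro mult_left_mono) auto
    thus ?thesis by (simp add: algebra_simps add_divide_distrib diff_divide_distrib)
  qed
  have c2: "4 / real n * C \<le> 2 * (lam0 + real B * mu0) * l1norm p d"
  proof -
    have "4 / real n * C \<le> 2 * (2 / real n * \<bar>C\<bar>)" using nn by (simp add: divide_simps)
    thus ?thesis using cross by linarith
  qed
  have c3: "2 * (lam0 + real B * mu0) * l1norm p d \<le> (lam + real B * mu) * l1norm p d"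
  proof -
    have "l1norm p d \<ge> 0" unfolding l1norm_def by (simp add: sum_nonneg)
    moreover have "real B * (2*mu0) \<le> real B * mu" using mu by (intro mult_left_mono) auto
    ultimately show ?thesis using lam by (intro mult_right_mono) (auto simp: algebra_simps)
  qed
  have c4: "2 * lam * (l1norm p \<theta>0 - l1norm p \<theta>hat) \<le> 2 * lam * (dS - hS)"
    using l1diff lam pos0 by (intro mult_left_mono) auto
  have c5: "2 * mu * (Dl1 p E a \<theta>0 - Dl1 p E a \<theta>hat) \<le> 2 * mu * (real B * l1norm p d)"
    using Dd mu0' by (intro mult_left_mono) auto
  have fin: "2 / real n * sqnorm n Md \<le> (lam + real B * mu) * l1norm p d + 2 * lam * (dS - hS) + 2 * mu * (real B * l1norm p d)"
    using step c2 c3 c4 c5 by linarith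
  have "2 / real n * sqnorm n Md + (lam - 3 * real B * mu) * hS \<le> (3 * lam + 3 * real B * mu) * dS"
    using fin unfolding dsplit by (simp add: algebra_simps)
  also have "\<dots> \<le> (3 * lam + 5 * real B * mu) * dS"
    using dS0 B0 by (intro mult_right_mono) (auto simp: mult.commute)
  finally show ?thesis unfolding Md_def M_def d_def dS_def hS_def .
qed

end
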